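(* Let $n\in\mathbb N_0$, $a\in I$ and $L\in C^{[n]}(I^2)$. Define $\ell(s)=\int_a^sL(s,t)e^{i\kappa t}\,dt$, $r(s)=-e^{i\kappa a}\sigma_n[L(s,\cdot)](a)$ and $g(s)=[\ell(s)-r(s)]e^{-i\kappa s}$ for $s\in I$. Then for every $l\in\{0,1,\dots,n\}$ and $s\in I$, $$g^{(l)}(s)=-\sum_{(q,p)\in\mathbb U_{n,l}}C_l^p(-i\kappa)^{l-1-p-q}L^{(p,q)}(s,s)+\sum_{p=0}^lC_l^p(-i\kappa)^{l-p-n}\int_a^sL^{(p,n)}(s,t)e^{i\kappa(t-s)}\,dt.$$
   Context: $I=[-1,1]$, $\kappa>1$. $C^{[n]}(I^2)$ is the space of functions on $I^2$ whose partial derivatives $L^{(\alpha,\beta)}=\partial_s^\alpha\partial_t^\beta L$ with $\alpha,\beta\le n$ are continuous. For a function $u$ of one variable, $\sigma_n[u](t)=\sum_{j=0}^{n-1}\frac{(-1)^j}{(i\kappa)^{j+1}}u^{(j)}(t)$ (empty sum $=0$ if $n=0$). $C_l^p=\frac{l!}{p!(l-p)!}$. $\mathbb U_{n,l}=\{(q,p):q\in\{0,\dots,n-1\},\ p\in\{0,\dots,l\},\ q+p\ge l\}$. *)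

theory Defs
  imports "HOL-Analysis.Analysis"
begin

abbreviation I_ivl :: "real set" where "I_ivl \<equiv> {-1..1}"

definition oint :: "real \<Rightarrow> real \<Rightarrow> (real \<Rightarrow> complex) \<Rightarrow> complex" where
  "oint a b f = (if a \<le> b then integral {a..b} f else - integral {b..a} f)"

text \<open>L belongs to C^[n](I^2) and D alpha beta = L^(alpha,beta) = d_s^alpha d_t^beta L on I^2
  (alpha, beta \<le> n): first beta derivatives in t, then alpha derivatives in s; all of them
  continuous on I^2. Derivatives are taken within I (one-sided at the endpoints).\<close>
definition Cn_partials :: "nat \<Rightarrow> (real \<Rightarrow> real \<Rightarrow> complex) \<Rightarrow> (nat \<Rightarrow> nat \<Rightarrow> real \<Rightarrow> real \<Rightarrow> complex) \<Rightarrow> bool" where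
  "Cn_partials n L (D :: nat \<Rightarrow> nat \<Rightarrow> real \<Rightarrow> real \<Rightarrow> complex) \<longleftrightarrow>
     (\<forall>s\<in>I_ivl. \<forall>t\<in>I_ivl. D 0 0 s t = L s t) \<and>
     (\<forall>\<beta><n. \<forall>s\<in>I_ivl. \<forall>t\<in>I_ivl.
        ((\<lambda>t'. D 0 \<beta> s t') has_vector_derivative D 0 (Suc \<beta>) s t) (at t within I_ivl)) \<and>
     (\<forall>\<alpha><n. \<forall>\<beta>\<le>n. \<forall>s\<in>I_ivl. \<forall>t\<in>I_ivl.
        ((\<lambda>s'. D \<alpha> \<beta> s' t) has_vector_derivative D (Suc \<alpha>) \<beta> s t) (at s within I_ivl)) \<and>
     (\<forall>\<alpha>\<le>n. \<forall>\<beta>\<le>n. continuous_on (I_ivl \<times> I_ivl) (\<lambda>(s, t). D \<alpha> \<beta> s t))"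

text \<open>sigma_n[u](t), with the derivatives u^(j) supplied as du j.\<close>
definition sigma_op :: "real \<Rightarrow> nat \<Rightarrow> (nat \<Rightarrow> real \<Rightarrow> complex) \<Rightarrow> real \<Rightarrow> complex" where
  "sigma_op \<kappa> n du t = (\<Sum>j<n. (-1)^j / (\<i> * complex_of_real \<kappa>)^(j+1) * du j t)"

definition U_set :: "nat \<Rightarrow> nat \<Rightarrow> (nat \<times> nat) set" where
  "U_set n l = {(q, p). q < n \<and> p \<in> {0..l} \<and> q + p \<ge> l}"

end

theory Submission
  imports Defs
begin


lemma exp_vd:
  fixes \<kappa> t x :: real
  shows "((\<lambda>x. exp (\<i> * \<kappa> * (t - x))) has_vector_derivative (- \<i> * \<kappa>) * exp (\<i> * \<kappa> * (t - x))) (at x within S)"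
proof -
  have 1: "((\<lambda>x. \<i> * \<kappa> * (t - x)) has_vector_derivative (- \<i> * \<kappa>)) (at x within S)"
    by (auto intro!: derivative_eq_intros simp: has_vector_derivative_def fun_eq_iff scaleR_conv_of_real algebra_simps)
  have "((exp \<circ> (\<lambda>x. \<i> * \<kappa> * (t - x))) has_vector_derivative (- \<i> * \<kappa>) * exp (\<i> * \<kappa> * (t - x))) (at x within S)"
    by (rule field_vector_diff_chain_within[OF 1]) (auto intro: has_field_derivative_at_within DERIV_exp)
  thus ?thesis by (simp add: o_def)
qed

lemma oint_FTC:
  fixes F f :: "real \<Rightarrow> complex"
  assumes "a \<in> I_ivl" "s \<in> I_ivl" "\<And>t. t \<in> I_ivl \<Longrightarrow> (F has_vector_derivative f t) (at t within I_ivl)"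
  shows "oint a s f = F s - F a"
proof (cases "a \<le> s")
  case True
  have "(f has_integral (F s - F a)) {a..s}"
    by (rule fundamental_theorem_of_calculus[OF True])
       (rule has_vector_derivative_within_subset[OF assms(3)], use assms in auto)
  then show ?thesis using True by (simp add: oint_def integral_unique)
next
  case False
  have "(f has_integral (F a - F s)) {s..a}"
    by (rule fundamental_theorem_of_calculus)
       (use False in simp, rule has_vector_derivative_within_subset[OF assms(3)], use assms in auto)
  then show ?thesis using False by (simp add: oint_def integral_unique)
qed

lemma oint_cong:
  assumes "a \<in> I_ivl" "s \<in> I_ivl" "\<And>t. t \<in> I_ivl \<Longrightarrow> f t = g t"
  shows "oint a s f = oint a s g"
  using assms unfolding oint_def by (auto intro!: integral_cong)

lemma oint_cmult: "oint a s (\<lambda>t. c * f t) = c * oint a s f"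
  unfolding oint_def by (simp add: integral_mult_right)

lemma oint_add:
  assumes "a \<in> I_ivl" "s \<in> I_ivl" "continuous_on I_ivl f" "continuous_on I_ivl g"
  shows "oint a s (\<lambda>t. f t + g t) = oint a s f + oint a s g"
proof -
  have "continuous_on {a..s} f" "continuous_on {a..s} g" "continuous_on {s..a} f" "continuous_on {s..a} g"
    using assms by (auto elim!: continuous_on_subset)
  then show ?thesis unfolding oint_def
    by (auto simp: integral_add integrable_continuous_interval)
qed

lemma oint_split:
  assumes "a \<in> I_ivl" "s \<in> I_ivl" "continuous_on I_ivl f"
  shows "oint a s f = integral {-1..s} f - integral {-1..a} f"
proof -
  have int: "f integrable_on {-1..1}" using assms integrable_continuous_interval by blast
  show ?thesis
  proof (cases "a \<le> s")
    case True
    have "integral {-1..a} f + integral {a..s} f = integral {-1..s} f"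
      using Henstock_Kurzweil_Integration.integral_combine[where a="-1" and c=a and b=s and f=f] assms True integrable_continuous_interval[where a="-1" and b=s and f=f] continuous_on_subset[OF assms(3), of "{-1..s}"] by auto
    then show ?thesis using True by (simp add: oint_def algebra_simps)
  next
    case False
    have "integral {-1..s} f + integral {s..a} f = integral {-1..a} f"
      using Henstock_Kurzweil_Integration.integral_combine[where a="-1" and c=s and b=a and f=f] assms False integrable_continuous_interval[where a="-1" and b=a and f=f] continuous_on_subset[OF assms(3), of "{-1..a}"] by auto
    then show ?thesis using False by (simp add: oint_def algebra_simps)
  qed
qed



lemma cont_slice:
  fixes f :: "real \<Rightarrow> real \<Rightarrow> complex"
  assumes cf: "continuous_on (I_ivl \<times> I_ivl) (\<lambda>(x, t). f x t)" and x: "x \<in> I_ivl"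
  shows "continuous_on I_ivl (\<lambda>t. f x t)"
proof -
  have "continuous_on I_ivl ((\<lambda>(x, t). f x t) \<circ> (\<lambda>t. (x, t)))"
    by (rule continuous_on_compose[OF _ continuous_on_subset[OF cf]]) (use x in \<open>auto intro!: continuous_intros\<close>)
  thus ?thesis by (simp add: o_def)
qed

lemma cont_slice1:
  fixes f :: "real \<Rightarrow> real \<Rightarrow> complex"
  assumes cf: "continuous_on (I_ivl \<times> I_ivl) (\<lambda>(x, t). f x t)" and t: "t \<in> I_ivl"
  shows "continuous_on I_ivl (\<lambda>x. f x t)"
proof -
  have "continuous_on I_ivl ((\<lambda>(x, t). f x t) \<circ> (\<lambda>x. (x, t)))"
    by (rule continuous_on_compose[OF _ continuous_on_subset[OF cf]]) (use t in \<open>auto intro!: continuous_intros\<close>)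
  thus ?thesis by (simp add: o_def)
qed

lemma diag_deriv:
  fixes f fx fy :: "real \<Rightarrow> real \<Rightarrow> complex"
  assumes fx: "\<And>x y. x \<in> I_ivl \<Longrightarrow> y \<in> I_ivl \<Longrightarrow> ((\<lambda>x. f x y) has_vector_derivative fx x y) (at x within I_ivl)"
    and fy: "\<And>x y. x \<in> I_ivl \<Longrightarrow> y \<in> I_ivl \<Longrightarrow> ((\<lambda>y. f x y) has_vector_derivative fy x y) (at y within I_ivl)"
    and cy: "continuous_on (I_ivl \<times> I_ivl) (\<lambda>(x, y). fy x y)"
    and s: "s \<in> I_ivl"
  shows "((\<lambda>s. f s s) has_vector_derivative fx s s + fy s s) (at s within I_ivl)"
proof -
  have P: "((\<lambda>(x, y). f x y) has_derivative (\<lambda>(tx, ty). tx *\<^sub>R fx s s + blinfun_apply (blinfun_scaleR_left (fy s s)) ty)) (at (s, s) within I_ivl \<times> I_ivl)"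
  proof (rule has_derivative_partialsI[where fy="\<lambda>x y. blinfun_scaleR_left (fy x y)"])
    show "((\<lambda>x. f x s) has_derivative (\<lambda>tx. tx *\<^sub>R fx s s)) (at s within I_ivl)"
      using fx[OF s s] by (simp add: has_vector_derivative_def)
    show "((\<lambda>y. f x y) has_derivative blinfun_apply (blinfun_scaleR_left (fy x y))) (at y within I_ivl)"
      if "x \<in> I_ivl" "y \<in> I_ivl" for x y
      using fy[OF that] by (simp add: has_vector_derivative_def)
    have "continuous_on (I_ivl \<times> I_ivl) (\<lambda>(x, y). blinfun_scaleR_left (fy x y))"
      using cy by (auto simp: split_beta intro!: continuous_intros)
    then show "continuous (at (s, s) within I_ivl \<times> I_ivl) (\<lambda>(x, y). blinfun_scaleR_left (fy x y))"
      using s by (simp add: continuous_on_eq_continuous_within)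
  qed (use s in \<open>auto simp: convex_real_interval\<close>)
  have Q: "((\<lambda>s. (s, s)) has_derivative (\<lambda>h. (h, h))) (at s within I_ivl)"
    by (auto intro!: derivative_eq_intros)
  have P2: "((\<lambda>(x, y). f x y) has_derivative (\<lambda>(tx, ty). tx *\<^sub>R fx s s + blinfun_apply (blinfun_scaleR_left (fy s s)) ty)) (at ((\<lambda>s. (s, s)) s) within (\<lambda>s. (s, s)) ` I_ivl)"
    by (rule has_derivative_subset[OF P]) auto
  have "(((\<lambda>(x, y). f x y) \<circ> (\<lambda>s. (s, s))) has_derivative (\<lambda>(tx, ty). tx *\<^sub>R fx s s + blinfun_apply (blinfun_scaleR_left (fy s s)) ty) \<circ> (\<lambda>h. (h, h))) (at s within I_ivl)"
    by (rule diff_chain_within[OF Q P2])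
  then have "((\<lambda>s. f s s) has_derivative (\<lambda>h. h *\<^sub>R fx s s + h *\<^sub>R fy s s)) (at s within I_ivl)"
    by (simp add: o_def)
  then show ?thesis
    unfolding has_vector_derivative_def by (simp add: scaleR_right_distrib)
qed

lemma moving_int:
  fixes f fx :: "real \<Rightarrow> real \<Rightarrow> complex"
  assumes fx: "\<And>x t. x \<in> I_ivl \<Longrightarrow> t \<in> I_ivl \<Longrightarrow> ((\<lambda>x. f x t) has_vector_derivative fx x t) (at x within I_ivl)"
    and cf: "continuous_on (I_ivl \<times> I_ivl) (\<lambda>(x, t). f x t)"
    and cfx: "continuous_on (I_ivl \<times> I_ivl) (\<lambda>(x, t). fx x t)"
    and a: "a \<in> I_ivl" and s: "s \<in> I_ivl"
  shows "((\<lambda>s. oint a s (f s)) has_vector_derivative f s s + oint a s (fx s)) (at s within I_ivl)"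
proof -
  define \<Phi> where "\<Phi> x y = integral {-1..y} (f x)" for x y
  have \<Phi>x: "((\<lambda>x. \<Phi> x y) has_vector_derivative integral {-1..y} (fx x)) (at x within I_ivl)"
    if x: "x \<in> I_ivl" and y: "y \<in> I_ivl" for x y
  proof -
    have "((\<lambda>x. integral (cbox (-1) y) (f x)) has_vector_derivative integral (cbox (-1) y) (fx x)) (at x within I_ivl)"
    proof (rule leibniz_rule_vector_derivative)
      show "((\<lambda>x. f x t) has_vector_derivative fx x t) (at x within I_ivl)"
        if "x \<in> I_ivl" "t \<in> cbox (- 1) y" for x t using that y by (intro fx) auto
      show "f x integrable_on cbox (- 1) y" if "x \<in> I_ivl" for x
        using continuous_on_subset[OF cont_slice[OF cf that], of "{-1..y}"] y
        by (auto intro: integrable_continuous_interval)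
      show "continuous_on (I_ivl \<times> cbox (- 1) y) (\<lambda>(x, t). fx x t)"
        by (rule continuous_on_subset[OF cfx]) (use y in auto)
    qed (use x in \<open>auto simp: convex_real_interval\<close>)
    then show ?thesis by (simp add: \<Phi>_def)
  qed
  have \<Phi>y: "((\<lambda>y. \<Phi> x y) has_vector_derivative f x y) (at y within I_ivl)"
    if x: "x \<in> I_ivl" and y: "y \<in> I_ivl" for x y
    unfolding \<Phi>_def by (rule integral_has_vector_derivative[OF cont_slice[OF cf x] y])
  have D1: "((\<lambda>s. \<Phi> s s) has_vector_derivative integral {-1..s} (fx s) + f s s) (at s within I_ivl)"
    by (rule diag_deriv[OF \<Phi>x \<Phi>y cf s])
  have D2: "((\<lambda>s. \<Phi> s a) has_vector_derivative integral {-1..a} (fx s)) (at s within I_ivl)"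
    by (rule \<Phi>x[OF s a])
  have D: "((\<lambda>s. \<Phi> s s - \<Phi> s a) has_vector_derivative integral {-1..s} (fx s) + f s s - integral {-1..a} (fx s)) (at s within I_ivl)"
    using has_vector_derivative_diff[OF D1 D2] by simp
  have eq: "oint a x (f x) = \<Phi> x x - \<Phi> x a" if "x \<in> I_ivl" for x
    unfolding \<Phi>_def by (rule oint_split[OF a that cont_slice[OF cf that]])
  have eq2: "oint a s (fx s) = integral {-1..s} (fx s) - integral {-1..a} (fx s)"
    by (rule oint_split[OF a s cont_slice[OF cfx s]])
  have "integral {-1..s} (fx s) + f s s - integral {-1..a} (fx s) = f s s + oint a s (fx s)"
    using eq2 by simp
  with has_vector_derivative_transform[OF s eq D] show ?thesis by metis
qed



lemma fixed_int:
  fixes f fx :: "real \<Rightarrow> real \<Rightarrow> complex"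
  assumes fx: "\<And>x t. x \<in> I_ivl \<Longrightarrow> t \<in> I_ivl \<Longrightarrow> ((\<lambda>x. f x t) has_vector_derivative fx x t) (at x within I_ivl)"
    and cf: "continuous_on (I_ivl \<times> I_ivl) (\<lambda>(x, t). f x t)"
    and cfx: "continuous_on (I_ivl \<times> I_ivl) (\<lambda>(x, t). fx x t)"
    and x: "x \<in> I_ivl" and y: "y \<in> I_ivl"
  shows "((\<lambda>x. integral {-1..y} (f x)) has_vector_derivative integral {-1..y} (fx x)) (at x within I_ivl)"
proof -
  have "((\<lambda>x. integral (cbox (-1) y) (f x)) has_vector_derivative integral (cbox (-1) y) (fx x)) (at x within I_ivl)"
  proof (rule leibniz_rule_vector_derivative)
    show "((\<lambda>x. f x t) has_vector_derivative fx x t) (at x within I_ivl)"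
      if "x \<in> I_ivl" "t \<in> cbox (- 1) y" for x t using that y by (intro fx) auto
    show "f x integrable_on cbox (- 1) y" if "x \<in> I_ivl" for x
      using continuous_on_subset[OF cont_slice[OF cf that], of "{-1..y}"] y
      by (auto intro: integrable_continuous_interval)
    show "continuous_on (I_ivl \<times> cbox (- 1) y) (\<lambda>(x, t). fx x t)"
      by (rule continuous_on_subset[OF cfx]) (use y in auto)
  qed (use x in \<open>auto simp: convex_real_interval\<close>)
  then show ?thesis by simp
qed

locale CnL =
  fixes n :: nat and L :: "real \<Rightarrow> real \<Rightarrow> complex" and D :: "nat \<Rightarrow> nat \<Rightarrow> real \<Rightarrow> real \<Rightarrow> complex"
  assumes CP: "Cn_partials n L D"
begin

lemma CP1: "\<forall>s\<in>I_ivl. \<forall>t\<in>I_ivl. D 0 0 s t = L s t"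
  using CP unfolding Cn_partials_def by (elim conjE) assumption
lemma CP2: "\<forall>\<beta><n. \<forall>s\<in>I_ivl. \<forall>t\<in>I_ivl.
        ((\<lambda>t'. D 0 \<beta> s t') has_vector_derivative D 0 (Suc \<beta>) s t) (at t within I_ivl)"
  using CP unfolding Cn_partials_def by (elim conjE) assumption
lemma CP3: "\<forall>\<alpha><n. \<forall>\<beta>\<le>n. \<forall>s\<in>I_ivl. \<forall>t\<in>I_ivl.
        ((\<lambda>s'. D \<alpha> \<beta> s' t) has_vector_derivative D (Suc \<alpha>) \<beta> s t) (at s within I_ivl)"
  using CP unfolding Cn_partials_def by (elim conjE) assumption
lemma CP4: "\<forall>\<alpha>\<le>n. \<forall>\<beta>\<le>n. continuous_on (I_ivl \<times> I_ivl) (\<lambda>(s, t). D \<alpha> \<beta> s t)"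
  using CP unfolding Cn_partials_def by (elim conjE) assumption

lemma D00: "s \<in> I_ivl \<Longrightarrow> t \<in> I_ivl \<Longrightarrow> D 0 0 s t = L s t"
  using CP1 by simp

lemma Dt0: "\<beta> < n \<Longrightarrow> s \<in> I_ivl \<Longrightarrow> t \<in> I_ivl \<Longrightarrow>
   ((\<lambda>t'. D 0 \<beta> s t') has_vector_derivative D 0 (Suc \<beta>) s t) (at t within I_ivl)"
  using CP2 by simp

lemma Ds: "\<alpha> < n \<Longrightarrow> \<beta> \<le> n \<Longrightarrow> s \<in> I_ivl \<Longrightarrow> t \<in> I_ivl \<Longrightarrow>
   ((\<lambda>s'. D \<alpha> \<beta> s' t) has_vector_derivative D (Suc \<alpha>) \<beta> s t) (at s within I_ivl)"
  using CP3 by simp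

lemma Dc: "\<alpha> \<le> n \<Longrightarrow> \<beta> \<le> n \<Longrightarrow> continuous_on (I_ivl \<times> I_ivl) (\<lambda>(s, t). D \<alpha> \<beta> s t)"
  using CP4 by simp

lemma Dt: "p \<le> n \<Longrightarrow> q < n \<Longrightarrow> s \<in> I_ivl \<Longrightarrow> t \<in> I_ivl \<Longrightarrow>
   ((\<lambda>t. D p q s t) has_vector_derivative D p (Suc q) s t) (at t within I_ivl)"
proof (induction p arbitrary: q s t)
  case 0
  then show ?case using Dt0 by blast
next
  case (Suc p)
  have pn: "p < n" using Suc.prems by simp
  have rep1: "D p q x y = D p q x (-1) + integral {-1..y} (D p (Suc q) x)"
    if "x \<in> I_ivl" "y \<in> I_ivl" for x y
  proof -
    have "oint (-1) y (D p (Suc q) x) = D p q x y - D p q x (-1)"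
      by (rule oint_FTC[where F="\<lambda>t. D p q x t"]) (use that Suc.prems in \<open>auto intro!: Suc.IH\<close>)
    then show ?thesis using that by (simp add: oint_def)
  qed
  have rep2: "D (Suc p) q s y = D (Suc p) q s (-1) + integral {-1..y} (D (Suc p) (Suc q) s)"
    if y: "y \<in> I_ivl" for y
  proof -
    have d1: "((\<lambda>x. D p q x y) has_vector_derivative D (Suc p) q s y) (at s within {-1..1})"
      using Ds[OF pn _ Suc.prems(3) y] Suc.prems by simp
    have d2: "((\<lambda>x. D p q x (-1) + integral {-1..y} (D p (Suc q) x)) has_vector_derivative
               D (Suc p) q s (-1) + integral {-1..y} (D (Suc p) (Suc q) s)) (at s within {-1..1})"
    proof (rule has_vector_derivative_add)
      show "((\<lambda>x. D p q x (- 1)) has_vector_derivative D (Suc p) q s (- 1)) (at s within {- 1..1})"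
        using Ds[OF pn _ Suc.prems(3)] Suc.prems by simp
      show "((\<lambda>x. integral {- 1..y} (D p (Suc q) x)) has_vector_derivative integral {- 1..y} (D (Suc p) (Suc q) s)) (at s within {- 1..1})"
      proof -
        have sq: "Suc q \<le> n" "p \<le> n" "Suc p \<le> n" using Suc.prems by auto
        have "\<And>x t. x \<in> I_ivl \<Longrightarrow> t \<in> I_ivl \<Longrightarrow> ((\<lambda>x. D p (Suc q) x t) has_vector_derivative D (Suc p) (Suc q) x t) (at x within I_ivl)"
          by (rule Ds[OF pn sq(1)])
        from fixed_int[OF this Dc[OF sq(2,1)] Dc[OF sq(3,1)] Suc.prems(3) y] show ?thesis by simp
      qed
    qed
    have d1': "((\<lambda>x. D p q x (-1) + integral {-1..y} (D p (Suc q) x)) has_vector_derivative D (Suc p) q s y) (at s within {-1..1})"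
      by (rule has_vector_derivative_transform[OF Suc.prems(3) _ d1]) (use rep1[OF _ y] in auto)
    show ?thesis
      using vector_derivative_unique_within_closed_interval[of "-1" 1 s, OF _ _ d1'[unfolded cbox_interval[symmetric]] d2[unfolded cbox_interval[symmetric]]] Suc.prems
      by simp
  qed
  have "((\<lambda>y. D (Suc p) q s (-1) + integral {-1..y} (D (Suc p) (Suc q) s)) has_vector_derivative 0 + D (Suc p) (Suc q) s t) (at t within {-1..1})"
    by (intro has_vector_derivative_add has_vector_derivative_const integral_has_vector_derivative
          cont_slice[OF Dc]) (use Suc.prems in auto)
  then have "((\<lambda>y. D (Suc p) q s (-1) + integral {-1..y} (D (Suc p) (Suc q) s)) has_vector_derivative D (Suc p) (Suc q) s t) (at t within I_ivl)"
    by simp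
  then show ?case
    by (rule has_vector_derivative_transform[OF Suc.prems(4), rotated]) (use rep2 in \<open>simp add: rep2[symmetric]\<close>)
qed

end


context CnL begin

lemma diagD: "p < n \<Longrightarrow> q < n \<Longrightarrow> s \<in> I_ivl \<Longrightarrow>
  ((\<lambda>s. D p q s s) has_vector_derivative D (Suc p) q s s + D p (Suc q) s s) (at s within I_ivl)"
  by (rule diag_deriv[OF Ds Dt Dc]) auto

lemma contE: fixes \<kappa> :: real shows "\<alpha> \<le> n \<Longrightarrow> \<beta> \<le> n \<Longrightarrow>
  continuous_on (I_ivl \<times> I_ivl) (\<lambda>(x, t). D \<alpha> \<beta> x t * exp (\<i> * \<kappa> * (t - x)))"
proof -
  assume a: "\<alpha> \<le> n" "\<beta> \<le> n"
  have c: "continuous_on (I_ivl \<times> I_ivl) (\<lambda>z. D \<alpha> \<beta> (fst z) (snd z))"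
    using Dc[OF a] by (simp add: split_beta)
  show ?thesis unfolding split_beta
    by (intro continuous_intros c)
qed

lemma HD:
  fixes \<kappa> :: real
  assumes p: "p < n" and a: "a \<in> I_ivl" and s: "s \<in> I_ivl"
  shows "((\<lambda>s. oint a s (\<lambda>t. D p n s t * exp (\<i> * \<kappa> * (t - s)))) has_vector_derivative
     D p n s s + (oint a s (\<lambda>t. D (Suc p) n s t * exp (\<i> * \<kappa> * (t - s)))
       + (- \<i> * \<kappa>) * oint a s (\<lambda>t. D p n s t * exp (\<i> * \<kappa> * (t - s))))) (at s within I_ivl)"
proof -
  define fx where "fx x t = D (Suc p) n x t * exp (\<i> * \<kappa> * (t - x)) + (- \<i> * \<kappa>) * (D p n x t * exp (\<i> * \<kappa> * (t - x)))" for x t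
  have d: "((\<lambda>x. D p n x t * exp (\<i> * \<kappa> * (t - x))) has_vector_derivative fx x t) (at x within I_ivl)"
    if "x \<in> I_ivl" "t \<in> I_ivl" for x t
  proof -
    have "((\<lambda>x. D p n x t * exp (\<i> * \<kappa> * (t - x))) has_vector_derivative
       D p n x t * ((- \<i> * \<kappa>) * exp (\<i> * \<kappa> * (t - x))) + D (Suc p) n x t * exp (\<i> * \<kappa> * (t - x))) (at x within I_ivl)"
      by (rule has_vector_derivative_mult[OF Ds[OF p _ that] exp_vd]) simp
    then show ?thesis unfolding fx_def by (simp add: algebra_simps)
  qed
  have cfx: "continuous_on (I_ivl \<times> I_ivl) (\<lambda>(x, t). fx x t)"
  proof -
    have c1: "continuous_on (I_ivl \<times> I_ivl) (\<lambda>z. D (Suc p) n (fst z) (snd z) * exp (\<i> * \<kappa> * (snd z - fst z)))"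
      using contE[where \<kappa>=\<kappa> and \<alpha>="Suc p" and \<beta>=n] p by (simp add: split_beta)
    have c2: "continuous_on (I_ivl \<times> I_ivl) (\<lambda>z. D p n (fst z) (snd z) * exp (\<i> * \<kappa> * (snd z - fst z)))"
      using contE[where \<kappa>=\<kappa> and \<alpha>=p and \<beta>=n] p by (simp add: split_beta)
    show ?thesis unfolding fx_def split_beta by (intro continuous_intros c1 c2)
  qed
  have M: "((\<lambda>s. oint a s (\<lambda>t. D p n s t * exp (\<i> * \<kappa> * (t - s)))) has_vector_derivative
      D p n s s * exp (\<i> * \<kappa> * (s - s)) + oint a s (fx s)) (at s within I_ivl)"
    by (rule moving_int[OF d contE[where \<kappa>=\<kappa> and \<alpha>=p and \<beta>=n] cfx a s]) (use p in auto)
  have cs1: "continuous_on I_ivl (\<lambda>t. D (Suc p) n s t * exp (\<i> * \<kappa> * (t - s)))"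
    using cont_slice[OF contE[where \<kappa>=\<kappa> and \<alpha>="Suc p" and \<beta>=n] s] p by simp
  have cs2: "continuous_on I_ivl (\<lambda>t. (- \<i> * \<kappa>) * (D p n s t * exp (\<i> * \<kappa> * (t - s))))"
    using continuous_on_mult_left[OF cont_slice[OF contE[where \<kappa>=\<kappa> and \<alpha>=p and \<beta>=n] s], of "- \<i> * \<kappa>"] p by simp
  have "oint a s (fx s) = oint a s (\<lambda>t. D (Suc p) n s t * exp (\<i> * \<kappa> * (t - s)))
       + (- \<i> * \<kappa>) * oint a s (\<lambda>t. D p n s t * exp (\<i> * \<kappa> * (t - s)))"
    unfolding fx_def by (simp only: oint_add[OF a s cs1 cs2] oint_cmult)
  then show ?thesis using M by simp
qed

end


lemma U_sum: "(\<Sum>(q, p)\<in>U_set n l. f q p) = (\<Sum>q<n. \<Sum>p\<le>l. if l \<le> q + p then f q p else 0)"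
proof -
  have U: "U_set n l = Sigma {..<n} (\<lambda>q. {p \<in> {..l}. l \<le> q + p})"
    unfolding U_set_def by auto
  have "(\<Sum>(q, p)\<in>U_set n l. f q p) = (\<Sum>q<n. \<Sum>p\<in>{p \<in> {..l}. l \<le> q + p}. f q p)"
    unfolding U by (rule sum.Sigma[symmetric]) auto
  also have "\<dots> = (\<Sum>q<n. \<Sum>p\<le>l. if l \<le> q + p then f q p else 0)"
    by (intro sum.cong refl sum.inter_filter) simp
  finally show ?thesis .
qed

lemma h_ident:
  fixes c :: complex and h :: "nat \<Rightarrow> complex"
  assumes c: "c \<noteq> 0"
  shows "(\<Sum>p\<le>k. of_nat (k choose p) * c powi (int k - int p - int n) * (h (Suc p) + c * h p))
       = (\<Sum>p\<le>Suc k. of_nat (Suc k choose p) * c powi (int (Suc k) - int p - int n) * h p)"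
proof -
  have cc: "c * c powi m = c powi (m + 1)" for m using c by (simp add: power_int_add_1')
  have e1: "(\<Sum>p\<le>Suc k. of_nat (Suc k choose p) * c powi (int (Suc k) - int p - int n) * h p)
     = c powi (int k + 1 - int n) * h 0 + (\<Sum>p\<le>k. of_nat (k choose p) * c powi (int k - int p - int n) * h (Suc p))
       + (\<Sum>p\<le>k. of_nat (k choose Suc p) * c powi (int k - int p - int n) * h (Suc p))"
    apply (simp only: sum.atMost_Suc_shift binomial_Suc_Suc of_nat_add)
    apply (simp add: sum.distrib algebra_simps)
    done
  have e2: "(\<Sum>p\<le>k. of_nat (k choose p) * c powi (int k - int p - int n) * (c * h p))
      = (\<Sum>p\<le>Suc k. of_nat (k choose p) * c powi (int k + 1 - int p - int n) * h p)"
  proof -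
    have ce: "c powi (int k + 1 - int p - int n) = c * c powi (int k - int p - int n)" for p
    proof -
      have "int k + 1 - int p - int n = (int k - int p - int n) + 1" by simp
      then show ?thesis by (simp only: cc)
    qed
    have "(\<Sum>p\<le>Suc k. of_nat (k choose p) * c powi (int k + 1 - int p - int n) * h p)
       = (\<Sum>p\<le>k. of_nat (k choose p) * c powi (int k + 1 - int p - int n) * h p)"
      by (simp add: sum.atMost_Suc)
    also have "\<dots> = (\<Sum>p\<le>k. of_nat (k choose p) * c powi (int k - int p - int n) * (c * h p))"
      by (intro sum.cong refl) (simp only: ce mult_ac)
    finally show ?thesis by simp
  qed
  also have "\<dots> = c powi (int k + 1 - int n) * h 0 + (\<Sum>p\<le>k. of_nat (k choose Suc p) * c powi (int k - int p - int n) * h (Suc p))"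
    by (simp only: sum.atMost_Suc_shift) (simp add: algebra_simps)
  finally show ?thesis unfolding e1 by (simp add: distrib_left sum.distrib algebra_simps)
qed

lemma d_ident:
  fixes c :: complex and d :: "nat \<Rightarrow> nat \<Rightarrow> complex"
  assumes kn: "k < n"
  shows "(\<Sum>(q, p)\<in>U_set n k. of_nat (k choose p) * c powi (int k - 1 - int p - int q) * (d (Suc p) q + d p (Suc q)))
     - (\<Sum>p\<le>k. of_nat (k choose p) * c powi (int k - int p - int n) * d p n)
     = (\<Sum>(q, p)\<in>U_set n (Suc k). of_nat (Suc k choose p) * c powi (int (Suc k) - 1 - int p - int q) * d p q)"
proof -
  define w where "w l q p = (if l \<le> q + p then of_nat (l choose p) * c powi (int l - 1 - int p - int q) else (0::complex))" for l q p
  define a where "a q = (\<Sum>p\<le>k. w k q p * d (Suc p) q)" for q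
  define b where "b q = (\<Sum>p\<le>k. w k q p * d p (Suc q))" for q
  define v where "v q p = (if Suc k \<le> q + p then c powi (int k - int p - int q) else (0::complex))" for q p
  define b' where "b' q = (\<Sum>p\<le>k. v q p * of_nat (k choose p) * d p q)" for q
  have L: "(\<Sum>(q, p)\<in>U_set n k. of_nat (k choose p) * c powi (int k - 1 - int p - int q) * (d (Suc p) q + d p (Suc q)))
     = (\<Sum>q<n. a q) + (\<Sum>q<n. b q)"
    unfolding U_sum a_def b_def w_def sum.distrib[symmetric]
    by (intro sum.cong refl) (simp add: algebra_simps)
  have R: "(\<Sum>(q, p)\<in>U_set n (Suc k). of_nat (Suc k choose p) * c powi (int (Suc k) - 1 - int p - int q) * d p q)
     = (\<Sum>q<n. \<Sum>p\<le>Suc k. w (Suc k) q p * d p q)"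
    unfolding U_sum w_def by (intro sum.cong refl) simp
  have bb: "b q = b' (Suc q)" for q
    unfolding b_def b'_def w_def v_def
    by (intro sum.cong refl) (auto simp: algebra_simps)
  have b0: "b' 0 = 0"
    unfolding b'_def v_def by (intro sum.neutral) auto
  have bn: "b' n = (\<Sum>p\<le>k. of_nat (k choose p) * c powi (int k - int p - int n) * d p n)"
    unfolding b'_def v_def using kn
    by (intro sum.cong refl) (auto simp: algebra_simps)
  have sb: "(\<Sum>q<n. b q) = (\<Sum>q<n. b' q) + b' n"
  proof -
    have "(\<Sum>q<Suc n. b' q) = b' 0 + (\<Sum>q<n. b' (Suc q))" by (rule sum.lessThan_Suc_shift)
    then show ?thesis using b0 by (simp add: bb)
  qed
  have per: "a q + b' q = (\<Sum>p\<le>Suc k. w (Suc k) q p * d p q)" for q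
  proof -
    have r: "(\<Sum>p\<le>Suc k. w (Suc k) q p * d p q) = w (Suc k) q 0 * d 0 q
        + (\<Sum>p\<le>k. w k q p * d (Suc p) q)
        + (\<Sum>p\<le>k. v q (Suc p) * of_nat (k choose Suc p) * d (Suc p) q)"
    proof -
      have "w (Suc k) q (Suc p) * d (Suc p) q = w k q p * d (Suc p) q + v q (Suc p) * of_nat (k choose Suc p) * d (Suc p) q" for p
        unfolding w_def v_def by (auto simp: algebra_simps)
      then show ?thesis by (simp only: sum.atMost_Suc_shift sum.distrib add.assoc)
    qed
    have w0: "w (Suc k) q 0 = v q 0" unfolding w_def v_def by simp
    have r2: "b' q = w (Suc k) q 0 * d 0 q + (\<Sum>p\<le>k. v q (Suc p) * of_nat (k choose Suc p) * d (Suc p) q)"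
    proof -
      have "b' q = (\<Sum>p\<le>Suc k. v q p * of_nat (k choose p) * d p q)"
        unfolding b'_def by (simp add: sum.atMost_Suc)
      also have "\<dots> = w (Suc k) q 0 * d 0 q + (\<Sum>p\<le>k. v q (Suc p) * of_nat (k choose Suc p) * d (Suc p) q)"
        by (simp only: sum.atMost_Suc_shift) (simp add: w0)
      finally show ?thesis .
    qed
    show ?thesis unfolding r r2 a_def by (simp add: algebra_simps)
  qed
  have fin: "(\<Sum>q<n. a q) + (\<Sum>q<n. b' q) = (\<Sum>q<n. \<Sum>p\<le>Suc k. w (Suc k) q p * d p q)"
    by (simp only: per[symmetric] sum.distrib)
  show ?thesis
    unfolding L R sb bn[symmetric] using fin by (metis add_diff_cancel_right' add.assoc)
qed



lemma exp_vd2: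
  fixes \<kappa> :: real
  shows "((\<lambda>t::real. exp (\<i> * \<kappa> * t)) has_vector_derivative (\<i> * \<kappa>) * exp (\<i> * \<kappa> * t)) (at t within S)"
proof -
  have 1: "((\<lambda>t::real. \<i> * \<kappa> * t) has_vector_derivative (\<i> * \<kappa>)) (at t within S)"
    by (auto intro!: derivative_eq_intros simp: has_vector_derivative_def fun_eq_iff scaleR_conv_of_real algebra_simps)
  have "((exp \<circ> (\<lambda>t::real. \<i> * \<kappa> * t)) has_vector_derivative (\<i> * \<kappa>) * exp (\<i> * \<kappa> * t)) (at t within S)"
    by (rule field_vector_diff_chain_within[OF 1]) (auto intro: has_field_derivative_at_within DERIV_exp)
  thus ?thesis by (simp add: o_def)
qed

context CnL begin

lemma contE0: fixes \<kappa> :: real shows "\<beta> \<le> n \<Longrightarrow> s \<in> I_ivl \<Longrightarrow> continuous_on I_ivl (\<lambda>t. D 0 \<beta> s t * exp (\<i> * \<kappa> * t))"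
  by (intro continuous_intros cont_slice[OF Dc]) auto

lemma IBP:
  fixes \<kappa> :: real
  assumes k: "\<kappa> \<noteq> 0" and a: "a \<in> I_ivl" and s: "s \<in> I_ivl"
  shows "m \<le> n \<Longrightarrow> oint a s (\<lambda>t. D 0 0 s t * exp (\<i> * \<kappa> * t)) =
     (\<Sum>j<m. (-1)^j / (\<i> * \<kappa>)^(j+1) * (D 0 j s s * exp (\<i> * \<kappa> * s) - D 0 j s a * exp (\<i> * \<kappa> * a)))
     + (-1)^m / (\<i> * \<kappa>)^m * oint a s (\<lambda>t. D 0 m s t * exp (\<i> * \<kappa> * t))"
proof (induction m)
  case 0
  then show ?case by simp
next
  case (Suc m)
  have mn: "m < n" using Suc.prems by simp
  have ik: "\<i> * complex_of_real \<kappa> \<noteq> 0" using k by simp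
  define F where "F t = D 0 m s t * exp (\<i> * \<kappa> * t) / (\<i> * \<kappa>)" for t
  have dF: "(F has_vector_derivative (D 0 m s t * exp (\<i> * \<kappa> * t) + (1 / (\<i> * \<kappa>)) * (D 0 (Suc m) s t * exp (\<i> * \<kappa> * t)))) (at t within I_ivl)"
    if t: "t \<in> I_ivl" for t
  proof -
    have "((\<lambda>t. D 0 m s t * exp (\<i> * \<kappa> * t)) has_vector_derivative
        D 0 m s t * ((\<i> * \<kappa>) * exp (\<i> * \<kappa> * t)) + D 0 (Suc m) s t * exp (\<i> * \<kappa> * t)) (at t within I_ivl)"
      by (rule has_vector_derivative_mult[OF Dt0[OF mn s t] exp_vd2])
    then have "((\<lambda>t. (1 / (\<i> * \<kappa>)) * (D 0 m s t * exp (\<i> * \<kappa> * t))) has_vector_derivative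
        (1 / (\<i> * \<kappa>)) * (D 0 m s t * ((\<i> * \<kappa>) * exp (\<i> * \<kappa> * t)) + D 0 (Suc m) s t * exp (\<i> * \<kappa> * t))) (at t within I_ivl)"
      by (rule has_vector_derivative_mult_right)
    then show ?thesis unfolding F_def using ik by (simp add: field_simps)
  qed
  have "oint a s (\<lambda>t. D 0 m s t * exp (\<i> * \<kappa> * t) + (1 / (\<i> * \<kappa>)) * (D 0 (Suc m) s t * exp (\<i> * \<kappa> * t))) = F s - F a"
    by (rule oint_FTC[OF a s dF])
  moreover have "oint a s (\<lambda>t. D 0 m s t * exp (\<i> * \<kappa> * t) + (1 / (\<i> * \<kappa>)) * (D 0 (Suc m) s t * exp (\<i> * \<kappa> * t)))
     = oint a s (\<lambda>t. D 0 m s t * exp (\<i> * \<kappa> * t)) + (1 / (\<i> * \<kappa>)) * oint a s (\<lambda>t. D 0 (Suc m) s t * exp (\<i> * \<kappa> * t))"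
    using oint_add[OF a s contE0[where \<kappa>=\<kappa>, OF less_imp_le[OF mn] s]
           continuous_on_mult_left[OF contE0[where \<kappa>=\<kappa>, OF Suc_leI[OF mn] s], of "1 / (\<i> * \<kappa>)"]]
    by (simp only: oint_cmult)
  ultimately have step: "oint a s (\<lambda>t. D 0 m s t * exp (\<i> * \<kappa> * t)) =
      F s - F a - (1 / (\<i> * \<kappa>)) * oint a s (\<lambda>t. D 0 (Suc m) s t * exp (\<i> * \<kappa> * t))"
    by (simp add: algebra_simps)
  show ?case
    unfolding Suc.IH[OF Suc_leD[OF Suc.prems]] step F_def
    using ik by (simp add: field_simps)
qed

end

lemma coef1:
  fixes \<kappa> :: real assumes "\<kappa> \<noteq> 0"
  shows "(-1)^j / (\<i> * \<kappa>)^(j+1) = - ((- \<i> * \<kappa>) powi (-1 - int j))"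
proof -
  have e: "-1 - int j = - int (Suc j)" by simp
  have "(- \<i> * complex_of_real \<kappa>) ^ Suc j = (-1) ^ Suc j * (\<i> * \<kappa>) ^ Suc j"
    by (simp add: power_mult_distrib[symmetric])
  then show ?thesis using assms
    unfolding e power_int_minus power_int_of_nat by (simp add: field_simps)
qed

lemma coef2:
  fixes \<kappa> :: real assumes "\<kappa> \<noteq> 0"
  shows "(-1)^m / (\<i> * \<kappa>)^m = (- \<i> * \<kappa>) powi (- int m)"
proof -
  have "(- \<i> * complex_of_real \<kappa>) ^ m = (-1) ^ m * (\<i> * \<kappa>) ^ m"
    by (simp add: power_mult_distrib[symmetric])
  then show ?thesis using assms
    unfolding power_int_minus power_int_of_nat by (simp add: field_simps)
qed



theorem lemma4p2:
  fixes n :: nat and a \<kappa> :: real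
    and L :: "real \<Rightarrow> real \<Rightarrow> complex"
    and D :: "nat \<Rightarrow> nat \<Rightarrow> real \<Rightarrow> real \<Rightarrow> complex"
    and ell r g :: "real \<Rightarrow> complex"
  assumes \<kappa>: "\<kappa> > 1"
    and a: "a \<in> I_ivl"
    and L: "Cn_partials n L D"
    and ell_def: "\<And>s. ell s = oint a s (\<lambda>t. L s t * exp (\<i> * \<kappa> * t))"
    and r_def: "\<And>s. r s = - exp (\<i> * \<kappa> * a) * sigma_op \<kappa> n (\<lambda>j t. D 0 j s t) a"
    and g_def: "\<And>s. g s = (ell s - r s) * exp (- \<i> * \<kappa> * s)"
  shows "\<exists>G :: nat \<Rightarrow> real \<Rightarrow> complex.
     (\<forall>s\<in>I_ivl. G 0 s = g s) \<and>
     (\<forall>k<n. \<forall>s\<in>I_ivl. (G k has_vector_derivative G (Suc k) s) (at s within I_ivl)) \<and>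
     (\<forall>l\<le>n. \<forall>s\<in>I_ivl.
        G l s =
          - (\<Sum>(q, p)\<in>U_set n l. of_nat (l choose p) * (- \<i> * \<kappa>) powi (int l - 1 - int p - int q) * D p q s s)
          + (\<Sum>p\<le>l. of_nat (l choose p) * (- \<i> * \<kappa>) powi (int l - int p - int n) *
               oint a s (\<lambda>t. D p n s t * exp (\<i> * \<kappa> * (t - s)))))"
proof -
  interpret CnL n L D by unfold_locales (rule L)
  have k0: "\<kappa> \<noteq> 0" using \<kappa> by simp
  define c where "c = - \<i> * complex_of_real \<kappa>"
  have c0: "c \<noteq> 0" using k0 by (simp add: c_def)
  define H where "H p s = oint a s (\<lambda>t. D p n s t * exp (\<i> * \<kappa> * (t - s)))" for p s
  define G where "G = (\<lambda>l s. - (\<Sum>(q, p)\<in>U_set n l. of_nat (l choose p) * c powi (int l - 1 - int p - int q) * D p q s s)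
          + (\<Sum>p\<le>l. of_nat (l choose p) * c powi (int l - int p - int n) * H p s))"
  have finU: "finite (U_set n l)" for l
    by (rule finite_subset[of _ "{..<n} \<times> {..l}"]) (auto simp: U_set_def)
  show ?thesis
  proof (intro exI[of _ G] conjI ballI allI impI)
    fix l s assume "l \<le> n" "s \<in> I_ivl"
    then show "G l s = - (\<Sum>(q, p)\<in>U_set n l. of_nat (l choose p) * (- \<i> * \<kappa>) powi (int l - 1 - int p - int q) * D p q s s)
          + (\<Sum>p\<le>l. of_nat (l choose p) * (- \<i> * \<kappa>) powi (int l - int p - int n) *
               oint a s (\<lambda>t. D p n s t * exp (\<i> * \<kappa> * (t - s))))"
      by (simp add: G_def c_def H_def)
  next
    fix k s assume kn: "k < n" and s: "s \<in> I_ivl"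
    have d1: "((\<lambda>s. \<Sum>(q, p)\<in>U_set n k. of_nat (k choose p) * c powi (int k - 1 - int p - int q) * D p q s s)
       has_vector_derivative (\<Sum>(q, p)\<in>U_set n k. of_nat (k choose p) * c powi (int k - 1 - int p - int q) * (D (Suc p) q s s + D p (Suc q) s s))) (at s within I_ivl)"
    proof (rule has_vector_derivative_sum)
      fix i assume i: "i \<in> U_set n k"
      obtain q p where ip: "i = (q, p)" by (cases i)
      have pq: "p < n" "q < n" using i ip kn by (auto simp: U_set_def)
      show "((\<lambda>s. case i of (q, p) \<Rightarrow> of_nat (k choose p) * c powi (int k - 1 - int p - int q) * D p q s s) has_vector_derivative
          (case i of (q, p) \<Rightarrow> of_nat (k choose p) * c powi (int k - 1 - int p - int q) * (D (Suc p) q s s + D p (Suc q) s s))) (at s within I_ivl)"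
        unfolding ip prod.case by (intro has_vector_derivative_mult_right diagD pq s)
    qed
    have d2: "((\<lambda>s. \<Sum>p\<le>k. of_nat (k choose p) * c powi (int k - int p - int n) * H p s)
       has_vector_derivative (\<Sum>p\<le>k. of_nat (k choose p) * c powi (int k - int p - int n) * (D p n s s + (H (Suc p) s + c * H p s)))) (at s within I_ivl)"
    proof (rule has_vector_derivative_sum)
      fix p assume "p \<in> {..k}"
      then have p: "p < n" using kn by simp
      show "((\<lambda>s. of_nat (k choose p) * c powi (int k - int p - int n) * H p s) has_vector_derivative
          of_nat (k choose p) * c powi (int k - int p - int n) * (D p n s s + (H (Suc p) s + c * H p s))) (at s within I_ivl)"
        unfolding H_def c_def by (intro has_vector_derivative_mult_right HD p a s)
    qed
    have dG: "(G k has_vector_derivative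
        - (\<Sum>(q, p)\<in>U_set n k. of_nat (k choose p) * c powi (int k - 1 - int p - int q) * (D (Suc p) q s s + D p (Suc q) s s))
        + (\<Sum>p\<le>k. of_nat (k choose p) * c powi (int k - int p - int n) * (D p n s s + (H (Suc p) s + c * H p s)))) (at s within I_ivl)"
      unfolding G_def by (intro has_vector_derivative_add has_vector_derivative_minus d1 d2)
    note DI = d_ident[OF kn, of c "\<lambda>p q. D p q s s"]
    note HI = h_ident[OF c0, of k n "\<lambda>p. H p s"]
    have "- (\<Sum>(q, p)\<in>U_set n k. of_nat (k choose p) * c powi (int k - 1 - int p - int q) * (D (Suc p) q s s + D p (Suc q) s s))
        + (\<Sum>p\<le>k. of_nat (k choose p) * c powi (int k - int p - int n) * (D p n s s + (H (Suc p) s + c * H p s)))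
      = - ((\<Sum>(q, p)\<in>U_set n k. of_nat (k choose p) * c powi (int k - 1 - int p - int q) * (D (Suc p) q s s + D p (Suc q) s s))
           - (\<Sum>p\<le>k. of_nat (k choose p) * c powi (int k - int p - int n) * D p n s s))
        + (\<Sum>p\<le>k. of_nat (k choose p) * c powi (int k - int p - int n) * (H (Suc p) s + c * H p s))"
      by (simp add: distrib_left sum.distrib)
    also have "\<dots> = G (Suc k) s"
      unfolding DI HI G_def by simp
    finally show "(G k has_vector_derivative G (Suc k) s) (at s within I_ivl)"
      using dG by simp
  next
    fix s assume s: "s \<in> I_ivl"
    have ell_eq: "ell s = oint a s (\<lambda>t. D 0 0 s t * exp (\<i> * \<kappa> * t))"
      unfolding ell_def by (rule oint_cong[OF a s]) (simp add: D00[OF s])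
    define \<alpha> where "\<alpha> j = (-1)^j / (\<i> * complex_of_real \<kappa>)^(j+1)" for j
    define \<beta> where "\<beta> = (-1)^n / (\<i> * complex_of_real \<kappa>)^n"
    define \<Omega> where "\<Omega> = oint a s (\<lambda>t. D 0 n s t * exp (\<i> * \<kappa> * t))"
    have IB: "ell s = (\<Sum>j<n. \<alpha> j * (D 0 j s s * exp (\<i> * \<kappa> * s) - D 0 j s a * exp (\<i> * \<kappa> * a))) + \<beta> * \<Omega>"
      unfolding ell_eq \<alpha>_def \<beta>_def \<Omega>_def by (rule IBP[OF k0 a s order_refl])
    have r_eq: "r s = - exp (\<i> * \<kappa> * a) * (\<Sum>j<n. \<alpha> j * D 0 j s a)"
      by (simp add: r_def sigma_op_def \<alpha>_def)
    have lr: "ell s - r s = (\<Sum>j<n. \<alpha> j * D 0 j s s) * exp (\<i> * \<kappa> * s) + \<beta> * \<Omega>"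
      unfolding IB r_eq
      by (simp add: algebra_simps sum_subtractf sum_distrib_left sum_distrib_right sum.distrib sum_negf)
    have EE: "exp (\<i> * complex_of_real \<kappa> * complex_of_real s) * exp (- \<i> * complex_of_real \<kappa> * complex_of_real s) = 1"
      by (simp add: exp_add[symmetric])
    have OE: "\<Omega> * exp (- \<i> * complex_of_real \<kappa> * complex_of_real s) = H 0 s"
    proof -
      have "\<Omega> * exp (- \<i> * complex_of_real \<kappa> * complex_of_real s)
          = oint a s (\<lambda>t. exp (- \<i> * complex_of_real \<kappa> * complex_of_real s) * (D 0 n s t * exp (\<i> * \<kappa> * t)))"
        unfolding \<Omega>_def oint_cmult by simp
      also have "\<dots> = H 0 s"
        unfolding H_def by (rule oint_cong[OF a s]) (simp add: exp_add[symmetric] algebra_simps)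
      finally show ?thesis .
    qed
    have G0: "G 0 s = - (\<Sum>q<n. c powi (-1 - int q) * D 0 q s s) + c powi (- int n) * H 0 s"
      unfolding G_def U_sum by simp
    have "g s = (\<Sum>j<n. \<alpha> j * D 0 j s s) * (exp (\<i> * complex_of_real \<kappa> * complex_of_real s) * exp (- \<i> * complex_of_real \<kappa> * complex_of_real s))
        + \<beta> * (\<Omega> * exp (- \<i> * complex_of_real \<kappa> * complex_of_real s))"
      unfolding g_def lr by (simp add: algebra_simps)
    also have "\<dots> = (\<Sum>j<n. \<alpha> j * D 0 j s s) + \<beta> * H 0 s"
      unfolding EE OE by simp
    also have "\<dots> = G 0 s"
      unfolding G0 \<alpha>_def \<beta>_def coef1[OF k0] coef2[OF k0] c_def
      by (simp add: sum_negf)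
    finally show "G 0 s = g s" by simp
  qed
qed


end
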